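(* Let $G=(g_1,\dots,g_k)\in\mathbb{N}_0^k$ be telescopic with $g_1>0$, $c(G)=(c_2,\dots,c_k)$ and $d=\gcd(G)$, and put $z_i=g_i/C_{i,k}$ for $1\le i\le k$ (these are non-negative integers, multiples of $d$, with $z_1=d$). Then $G$ is minimal if and only if $c_j>1$ for all $2\le j\le k$ and $z_j\nmid z_iC_{i,j}$ for all $1\le i<j\le k$.
   Context: For $G\in\mathbb{N}_0^k$, $\langle G\rangle$ is the set of $\mathbb{N}_0$-linear combinations of its entries; $G$ is minimal if no proper subsequence generates $\langle G\rangle$. $G_i=(g_1,\dots,g_i)$, $d_i=\gcd(G_i)$, $c_j=d_{j-1}/d_j$ for $2\le j\le k$. $G$ is telescopic if $c_jg_j\in\langle G_{j-1}\rangle$ for $2\le j\le k$. For $0\le m,n$, $C_{m,n}=\prod_{j=m+1}^n c_j$, an empty product (when $n\le m$) being $1$. Here $a\mid b$ means $b=at$ for some integer $t$. *)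

theory Defs
  imports Main
begin

text \<open>A sequence G = (g_1,...,g_k) is represented by a function g :: nat => nat
  together with its length k; only the values g 1, ..., g k matter.
  Subsequences are given by sets of indices I \<subseteq> {1..k}.\<close>

definition gen :: "(nat \<Rightarrow> nat) \<Rightarrow> nat set \<Rightarrow> nat set" where
  "gen g I = {\<Sum>i\<in>I. a i * g i | a. True}"

definition minimal :: "(nat \<Rightarrow> nat) \<Rightarrow> nat \<Rightarrow> bool" where
  "minimal g k \<longleftrightarrow> \<not> (\<exists>I. I \<subset> {1..k} \<and> gen g I = gen g {1..k})"

definition dseq :: "(nat \<Rightarrow> nat) \<Rightarrow> nat \<Rightarrow> nat" where
  "dseq g i = Gcd (g ` {1..i})"

definition cseq :: "(nat \<Rightarrow> nat) \<Rightarrow> nat \<Rightarrow> nat" where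
  "cseq g j = dseq g (j - 1) div dseq g j"

definition telescopic :: "(nat \<Rightarrow> nat) \<Rightarrow> nat \<Rightarrow> bool" where
  "telescopic g k \<longleftrightarrow> (\<forall>j\<in>{2..k}. cseq g j * g j \<in> gen g {1..j-1})"

definition Cprod :: "(nat \<Rightarrow> nat) \<Rightarrow> nat \<Rightarrow> nat \<Rightarrow> nat" where
  "Cprod g m n = (\<Prod>j\<in>{m+1..n}. cseq g j)"

definition zseq :: "(nat \<Rightarrow> nat) \<Rightarrow> nat \<Rightarrow> nat \<Rightarrow> nat" where
  "zseq g k i = g i div Cprod g i k"

end

theory Submission
  imports Defs
begin

lemma D_Suc: "dseq g (Suc n) = gcd (g (Suc n)) (dseq g n)"
  unfolding dseq_def by (simp add: atLeastAtMostSuc_conv Gcd_insert)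

lemma D_dvd: "1 \<le> i \<Longrightarrow> i \<le> n \<Longrightarrow> dseq g n dvd g i"
  unfolding dseq_def by (rule Gcd_dvd) auto

lemma D_pos: "g 1 > 0 \<Longrightarrow> n \<ge> 1 \<Longrightarrow> dseq g n > 0"
proof (rule ccontr)
  assume "g 1 > 0" "n \<ge> 1" "\<not> dseq g n > 0"
  then have "dseq g n = 0" by simp
  moreover have "dseq g n dvd g 1" using D_dvd[of 1 n g] \<open>n \<ge> 1\<close> by simp
  ultimately show False using \<open>g 1 > 0\<close> by simp
qed

lemma D_dvd_D: "m \<le> n \<Longrightarrow> dseq g n dvd dseq g m"
  unfolding dseq_def by (rule Gcd_greatest) (auto intro!: Gcd_dvd)

lemma cseq_mult: "cseq g j * dseq g j = dseq g (j - 1)"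
  unfolding cseq_def by (simp add: D_dvd_D)

lemma Cprod_mult: "m \<le> n \<Longrightarrow> Cprod g m n * dseq g n = dseq g m"
proof (induction n rule: dec_induct)
  case base
  then show ?case by (simp add: Cprod_def)
next
  case (step n)
  have "Cprod g m (Suc n) = Cprod g m n * cseq g (Suc n)"
    unfolding Cprod_def using step by (simp add: prod.cl_ivl_Suc)
  then have "Cprod g m (Suc n) * dseq g (Suc n) = Cprod g m n * (cseq g (Suc n) * dseq g (Suc n))"
    by simp
  also have "\<dots> = Cprod g m n * dseq g n" using cseq_mult[of g "Suc n"] by simp
  finally show ?case using step by simp
qed

lemma genI: "x = (\<Sum>i\<in>I. a i * g i) \<Longrightarrow> x \<in> gen g I"
  unfolding gen_def by blast

lemma gen_mono: "finite J \<Longrightarrow> I \<subseteq> J \<Longrightarrow> gen g I \<subseteq> gen g J"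
proof
  fix x assume fJ: "finite J" and IJ: "I \<subseteq> J" and "x \<in> gen g I"
  then obtain a where x: "x = (\<Sum>i\<in>I. a i * g i)" unfolding gen_def by auto
  have "(\<Sum>i\<in>J. (if i \<in> I then a i else 0) * g i) = (\<Sum>i\<in>J. if i \<in> I then a i * g i else 0)"
    by (rule sum.cong) auto
  also have "\<dots> = (\<Sum>i\<in>J \<inter> I. a i * g i)" using sum.inter_restrict[OF fJ, of "\<lambda>i. a i * g i" I] by simp
  also have "J \<inter> I = I" using IJ by auto
  finally show "x \<in> gen g J" using x by (intro genI[where a="\<lambda>i. if i \<in> I then a i else 0"]) simp
qed

lemma gen_elem: "finite J \<Longrightarrow> j \<in> J \<Longrightarrow> t * g j \<in> gen g J"
proof -
  assume fJ: "finite J" and jJ: "j \<in> J"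
  have "(\<Sum>i\<in>J. (if i = j then t else 0) * g i) = (\<Sum>i\<in>J. if i = j then t * g i else 0)"
    by (rule sum.cong) auto
  also have "\<dots> = t * g j" using sum.delta[OF fJ, of j "\<lambda>i. t * g i"] jJ by simp
  finally show ?thesis by (intro genI[where a="\<lambda>i. if i = j then t else 0"]) simp
qed

lemma gen_remove:
  assumes fJ: "finite J" and mJ: "m \<in> J" and gm: "g m \<in> gen g (J - {m})"
  shows "gen g (J - {m}) = gen g J"
proof
  show "gen g (J - {m}) \<subseteq> gen g J" using gen_mono[OF fJ] by blast
next
  obtain b where b: "g m = (\<Sum>i\<in>J - {m}. b i * g i)" using gm unfolding gen_def by auto
  show "gen g J \<subseteq> gen g (J - {m})"
  proof
    fix x assume "x \<in> gen g J"
    then obtain a where x: "x = (\<Sum>i\<in>J. a i * g i)" unfolding gen_def by auto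
    have "x = a m * g m + (\<Sum>i\<in>J - {m}. a i * g i)" using x sum.remove[OF fJ mJ] by simp
    also have "\<dots> = (\<Sum>i\<in>J - {m}. a m * (b i * g i)) + (\<Sum>i\<in>J - {m}. a i * g i)"
      using b by (simp add: sum_distrib_left)
    also have "\<dots> = (\<Sum>i\<in>J - {m}. (a m * b i + a i) * g i)"
      by (simp add: sum.distrib algebra_simps)
    finally show "x \<in> gen g (J - {m})" by (rule genI)
  qed
qed

lemma zdvd_iff:
  assumes g1: "g 1 > 0" and ij: "1 \<le> i" "i < j" "j \<le> k"
  shows "zseq g k j dvd zseq g k i * Cprod g i j \<longleftrightarrow> g j dvd g i"
proof -
  have Dk: "dseq g k > 0" using D_pos[of g, OF g1] ij by simp
  have Pi: "Cprod g i k * dseq g k = dseq g i" using Cprod_mult ij by simp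
  have Pj: "Cprod g j k * dseq g k = dseq g j" using Cprod_mult ij by simp
  have Pij: "Cprod g i j * dseq g j = dseq g i" using Cprod_mult ij by simp
  have "Cprod g i j * Cprod g j k * dseq g k = Cprod g i k * dseq g k"
  proof -
    have "Cprod g i j * Cprod g j k * dseq g k = Cprod g i j * (Cprod g j k * dseq g k)"
      by (simp only: mult.assoc)
    also have "\<dots> = dseq g i" using Pj Pij by simp
    finally show ?thesis using Pi by simp
  qed
  then have prod: "Cprod g i j * Cprod g j k = Cprod g i k" using Dk by simp
  have "dseq g j > 0" using D_pos[of g, OF g1, of j] ij by simp
  then have Pjpos: "Cprod g j k \<noteq> 0" using Pj by (cases "Cprod g j k = 0") auto
  have "Cprod g i k dvd dseq g i" using Pi by (metis dvd_triv_left)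
  then have "Cprod g i k dvd g i" using D_dvd[of i i g] ij by (auto intro: dvd_trans)
  then have zi: "zseq g k i * Cprod g i k = g i" unfolding zseq_def by simp
  have "Cprod g j k dvd dseq g j" using Pj by (metis dvd_triv_left)
  then have "Cprod g j k dvd g j" using D_dvd[of j j g] ij by (auto intro: dvd_trans)
  then have zj: "zseq g k j * Cprod g j k = g j" unfolding zseq_def by simp
  have e1: "zseq g k j dvd zseq g k i * Cprod g i j \<longleftrightarrow>
        zseq g k j * Cprod g j k dvd zseq g k i * Cprod g i j * Cprod g j k"
    using Pjpos by (rule dvd_times_right_cancel_iff[symmetric])
  have e2: "zseq g k i * Cprod g i j * Cprod g j k = g i"
    using zi prod by (simp only: mult.assoc)
  show ?thesis unfolding e1 e2 zj ..
qed

lemma low: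
  assumes g1: "g 1 > 0" and c1: "\<forall>j\<in>{2..k}. cseq g j > 1" and m: "1 \<le> m" "m \<le> k"
    and n: "n < m"
  shows "g m \<noteq> (\<Sum>i\<in>{1..n}. a i * g i)"
proof
  assume eq: "g m = (\<Sum>i\<in>{1..n}. a i * g i)"
  show False
  proof (cases "m = 1")
    case True
    then show ?thesis using eq n g1 by simp
  next
    case False
    then have m2: "m \<ge> 2" using m by simp
    have "dseq g (m - 1) dvd (\<Sum>i\<in>{1..n}. a i * g i)"
      using n by (intro dvd_sum) (auto intro!: dvd_mult D_dvd)
    then have dv: "dseq g (m - 1) dvd g m" using eq by simp
    have "dseq g m = gcd (g m) (dseq g (m - 1))"
      using D_Suc[of g "m - 1"] m2 by simp
    also have "\<dots> = dseq g (m - 1)" using dv by (simp add: gcd_nat.absorb1 gcd_nat.absorb2)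
    finally have "cseq g m = 1" unfolding cseq_def using D_pos[of g, OF g1, of "m - 1"] m2 by simp
    moreover have "m \<in> {2..k}" using m m2 by simp
    ultimately show False using c1 by fastforce
  qed
qed

lemma notmin: "m \<in> {1..k} \<Longrightarrow> g m \<in> gen g ({1..k} - {m}) \<Longrightarrow> \<not> minimal g k"
proof -
  assume m: "m \<in> {1..k}" and gm: "g m \<in> gen g ({1..k} - {m})"
  have A: "gen g ({1..k} - {m}) = gen g {1..k}" by (rule gen_remove[OF _ m gm]) simp
  have B: "{1..k} - {m} \<subset> {1..k}" using m by blast
  show ?thesis unfolding minimal_def using A B by blast
qed

lemma key:
  assumes g1: "g 1 > 0" and tel: "telescopic g k" and c1: "\<forall>j\<in>{2..k}. cseq g j > 1"
    and nd: "\<forall>i j. 1 \<le> i \<and> i < j \<and> j \<le> k \<longrightarrow> \<not> g j dvd g i"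
    and m: "1 \<le> m" "m \<le> k"
  shows "n \<le> k \<Longrightarrow> a m = 0 \<Longrightarrow> g m \<noteq> (\<Sum>i\<in>{1..n}. a i * g i)"
proof (induction n arbitrary: a)
  case 0
  then show ?case using low[OF g1 c1 m, of 0 a] m by simp
next
  case (Suc n)
  show ?case
  proof (cases "Suc n \<le> m")
    case True
    have "(\<Sum>i\<in>{1..Suc n}. a i * g i) = (\<Sum>i\<in>{1..n}. a i * g i) + a (Suc n) * g (Suc n)"
      by (simp add: sum.cl_ivl_Suc)
    moreover have "a (Suc n) * g (Suc n) = 0 \<or> Suc n < m" using True Suc.prems
      by (cases "Suc n = m") auto
    moreover have "g m \<noteq> (\<Sum>i\<in>{1..n}. a i * g i)" using low[OF g1 c1 m, of n a] True by simp
    moreover have "Suc n < m \<Longrightarrow> g m \<noteq> (\<Sum>i\<in>{1..Suc n}. a i * g i)"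
      using low[OF g1 c1 m, of "Suc n" a] by simp
    ultimately show ?thesis by auto
  next
    case False
    define j where "j = Suc n"
    have jm: "m < j" "j \<le> k" "j \<ge> 2" using False Suc.prems m unfolding j_def by auto
    have cj: "cseq g j > 1" using c1 jm by auto
    have IH: "\<And>a. a m = 0 \<Longrightarrow> g m \<noteq> (\<Sum>i\<in>{1..n}. a i * g i)" using Suc by simp
    have "cseq g j * g j \<in> gen g {1..j-1}" using tel jm unfolding telescopic_def by auto
    then obtain b where b: "cseq g j * g j = (\<Sum>i\<in>{1..n}. b i * g i)"
      unfolding gen_def j_def by auto
    have sumj: "\<And>a. (\<Sum>i\<in>{1..j}. a i * g i) = (\<Sum>i\<in>{1..n}. a i * g i) + a j * g j"
      unfolding j_def by (simp add: sum.cl_ivl_Suc)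
    have "\<forall>a. a m = 0 \<and> a j = v \<longrightarrow> g m \<noteq> (\<Sum>i\<in>{1..j}. a i * g i)" for v
    proof (induction v rule: less_induct)
      case (less v)
      show ?case
      proof (intro allI impI)
        fix a assume av: "a m = 0 \<and> a j = v"
        show "g m \<noteq> (\<Sum>i\<in>{1..j}. a i * g i)"
        proof
          assume eq: "g m = (\<Sum>i\<in>{1..j}. a i * g i)"
          define S where "S = (\<Sum>i\<in>{1..n}. a i * g i)"
          have eq2: "g m = S + v * g j" using eq sumj av S_def by simp
          show False
          proof (cases "v = 0")
            case True
            then show False using IH[of a] av eq2 S_def by simp
          next
            case False
            have "dseq g n dvd S" unfolding S_def by (intro dvd_sum) (auto intro!: dvd_mult D_dvd)
            moreover have "dseq g n dvd g m" using D_dvd[of m n g] m jm j_def by simp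
            ultimately have "dseq g n dvd v * g j" using eq2 by (simp add: dvd_add_right_iff)
            moreover have "dseq g n dvd v * dseq g n" by simp
            ultimately have "dseq g n dvd gcd (v * g j) (v * dseq g n)" by simp
            also have "gcd (v * g j) (v * dseq g n) = v * dseq g j"
              using D_Suc[of g n] j_def by (simp add: gcd_mult_left)
            finally have d1: "dseq g n dvd v * dseq g j" .
            have "cseq g j * dseq g j = dseq g n" using cseq_mult[of g j] j_def by simp
            moreover have "dseq g j > 0" using D_pos[of g, OF g1, of j] jm by simp
            ultimately have "cseq g j dvd v" using d1
              by (metis dvd_times_right_cancel_iff less_nat_zero_code neq0_conv)
            then have vge: "cseq g j \<le> v" using False by (simp add: dvd_imp_le)
            show False
            proof (cases "b m = 0")
              case False
              have "m \<in> {1..n}" using m jm j_def by auto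
              then have "b m * g m \<le> (\<Sum>i\<in>{1..n}. b i * g i)"
                by (intro member_le_sum) auto
              moreover have "g m \<le> b m * g m" using False by simp
              ultimately have "g m \<le> cseq g j * g j" using b by linarith
              moreover have "cseq g j * g j \<le> g m" using eq2 vge
                by (metis le_add2 le_trans mult_le_mono1)
              ultimately have "g m = cseq g j * g j" by simp
              then have "g j dvd g m" by simp
              then show False using nd m jm by blast
            next
              case True
              define a' where "a' = (\<lambda>i. if i = j then v - cseq g j else a i + b i)"
              have "(\<Sum>i\<in>{1..n}. a' i * g i) = (\<Sum>i\<in>{1..n}. a i * g i + b i * g i)"
                by (rule sum.cong) (auto simp: a'_def j_def algebra_simps)
              then have "(\<Sum>i\<in>{1..j}. a' i * g i) = S + cseq g j * g j + (v - cseq g j) * g j"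
                using sumj[of a'] b by (simp add: sum.distrib S_def a'_def)
              also have "\<dots> = S + v * g j" using vge
                by (metis add.assoc add_mult_distrib le_add_diff_inverse)
              finally have "g m = (\<Sum>i\<in>{1..j}. a' i * g i)" using eq2 by simp
              moreover have "a' m = 0" using True av jm by (simp add: a'_def)
              moreover have "a' j < v" using cj False by (simp add: a'_def)
              ultimately show False using less by blast
            qed
          qed
        qed
      qed
    qed
    then show ?thesis using Suc.prems j_def by blast
  qed
qed

theorem mainTheorem6:
  fixes g :: "nat \<Rightarrow> nat" and k :: nat
  assumes "k \<ge> 1" and "g 1 > 0" and "telescopic g k"
  shows "minimal g k \<longleftrightarrow>
    ((\<forall>j\<in>{2..k}. cseq g j > 1) \<and>
     (\<forall>i j. 1 \<le> i \<and> i < j \<and> j \<le> k \<longrightarrow>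
        \<not> (zseq g k j dvd zseq g k i * Cprod g i j)))"
proof -
  have zz: "(\<forall>i j. 1 \<le> i \<and> i < j \<and> j \<le> k \<longrightarrow> \<not> (zseq g k j dvd zseq g k i * Cprod g i j))
     \<longleftrightarrow> (\<forall>i j. 1 \<le> i \<and> i < j \<and> j \<le> k \<longrightarrow> \<not> g j dvd g i)"
  proof -
    have "1 \<le> i \<and> i < j \<and> j \<le> k \<longrightarrow>
      ((zseq g k j dvd zseq g k i * Cprod g i j) \<longleftrightarrow> g j dvd g i)" for i j
      using zdvd_iff[of g i j k, OF assms(2)] by blast
    then show ?thesis by blast
  qed
  show ?thesis unfolding zz
  proof
    assume min: "minimal g k"
    show "(\<forall>j\<in>{2..k}. cseq g j > 1) \<and> (\<forall>i j. 1 \<le> i \<and> i < j \<and> j \<le> k \<longrightarrow> \<not> g j dvd g i)"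
    proof (intro conjI ballI allI impI notI)
      fix j assume j: "j \<in> {2..k}"
      show "cseq g j > 1"
      proof (rule ccontr)
        assume "\<not> cseq g j > 1"
        moreover have "cseq g j * dseq g j > 0"
        proof -
          have "1 \<le> j - 1" using j by auto
          then have "dseq g (j - 1) > 0" using D_pos[of g, OF assms(2), of "j - 1"] by blast
          then show ?thesis using cseq_mult[of g j] by simp
        qed
        ultimately have c: "cseq g j = 1" by (cases "cseq g j") auto
        have "cseq g j * g j \<in> gen g {1..j-1}" using assms(3) j unfolding telescopic_def by (rule bspec)
        then have "g j \<in> gen g {1..j-1}" using c by simp
        also have "gen g {1..j-1} \<subseteq> gen g ({1..k} - {j})" using j by (intro gen_mono) auto
        finally show False using notmin[of j k g] j min by auto
      qed
    next
      fix i j assume ij: "1 \<le> i \<and> i < j \<and> j \<le> k" and d: "g j dvd g i"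
      then obtain t where t: "g i = g j * t" by (auto elim: dvdE)
      have "t * g j \<in> gen g ({1..k} - {i})" using ij by (intro gen_elem) auto
      then show False using notmin[of i k g] ij min t by (simp add: mult.commute)
    qed
  next
    assume H: "(\<forall>j\<in>{2..k}. cseq g j > 1) \<and> (\<forall>i j. 1 \<le> i \<and> i < j \<and> j \<le> k \<longrightarrow> \<not> g j dvd g i)"
    show "minimal g k" unfolding minimal_def
    proof
      assume "\<exists>I. I \<subset> {1..k} \<and> gen g I = gen g {1..k}"
      then obtain I where I: "I \<subset> {1..k}" "gen g I = gen g {1..k}" by blast
      then obtain m where m: "m \<in> {1..k}" "m \<notin> I" by blast
      have "1 * g m \<in> gen g {1..k}" using m by (intro gen_elem) auto
      then have "g m \<in> gen g I" using I by simp
      then obtain a where a: "g m = (\<Sum>i\<in>I. a i * g i)" unfolding gen_def by auto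
      have "(\<Sum>i\<in>{1..k}. (if i \<in> I then a i else 0) * g i) = (\<Sum>i\<in>{1..k}. if i \<in> I then a i * g i else 0)"
        by (rule sum.cong) auto
      also have "\<dots> = (\<Sum>i\<in>{1..k} \<inter> I. a i * g i)" using sum.inter_restrict[of "{1..k}" "\<lambda>i. a i * g i" I] by simp
      also have "{1..k} \<inter> I = I" using I by auto
      finally have "g m = (\<Sum>i\<in>{1..k}. (if i \<in> I then a i else 0) * g i)" using a by simp
      moreover have "g m \<noteq> (\<Sum>i\<in>{1..k}. (if i \<in> I then a i else 0) * g i)"
        using key[OF assms(2) assms(3) _ _ _ _ order_refl, of m "\<lambda>i. if i \<in> I then a i else 0"] H m
        by auto
      ultimately show False by simp
    qed
  qed
qed

end
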